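(* For every contention-resolution protocol of the form described in the context (i.e. every choice of emission probabilities $p_w$, one for each binary word $w$ of length $<k$), one can associate $m+1$ real numbers $z_0,\dots,z_m$ in $[0,1]$ with $0=z_0<z_1<\dots<z_{m-1}<z_m=1$ such that the probability of success (non-collision) of the protocol is $$\rho=\sum_{i\in\{1,\dots,m\}}(z_i-z_{i-1})f'(z_{i-1}),$$ and the probabilities used in the rounds of selection are given by $$p_w=\frac{z_{\#(w)2^{k-l(w)}+2^{k-l(w)}}-z_{\#(w)2^{k-l(w)}+2^{k-l(w)-1}}}{z_{\#(w)2^{k-l(w)}+2^{k-l(w)}}-z_{\#(w)2^{k-l(w)}}}.$$ Conversely, to every family of real numbers $z_0,\dots,z_m$ with $0=z_0<z_1<\dots<z_{m-1}<z_m=1$ one can associate such a selection protocol, with probabilities $p_w$ given by the second formula, whose probability of success is given by the first formula.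
   Context: A random number $n\ge 1$ of stations contend for a channel; $q_n\ge 0$ is the probability that exactly $n$ stations contend, $\sum_{n\geq1}q_n=1$, and $f(x)=\sum_{n\geq1}q_nx^n$ is its generating function. Contention is resolved in $k$ rounds (mini-slots) of selection, and $m=2^k$. For a word $w$ over the alphabet $\{0,1\}$, $l(w)$ denotes its length and $\#(w)$ the integer whose binary representation is $w$. At round $t\in\{1,\dots,k\}$, each station not yet eliminated emits a signal with probability $p_w$, where $w=r(1)\dots r(t-1)$ is the word of previous try-bits, $r(s)\in\{0,1\}$ indicating whether at least one station emitted at round $s$ (so at round 1 the probability is $p_{\emptyset}$). A station that does not emit and hears a signal from another station withdraws; all other stations remain. The protocol succeeds if exactly one station remains after the $k$ rounds; $\rho$ denotes this success probability. *)

theory Defs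
  imports "HOL-Analysis.Analysis"
begin

text \<open>Words over {0,1} are bool lists, True = 1; the head of the list is r(1).
  bin_val w is the integer whose binary representation is w (most significant bit first).\<close>
definition bin_val :: "bool list \<Rightarrow> nat" where
  "bin_val w = foldl (\<lambda>a b. 2 * a + (if b then 1 else 0)) 0 w"

text \<open>succ_prob p r w j: probability that exactly one station remains after the
  remaining r rounds, given that the history of try-bits so far is w and j stations
  are still in contention. Each of the j stations emits independently with
  probability p w; if e \<ge> 1 stations emit, exactly those e remain and the try-bit is 1;
  if none emits, all j remain and the try-bit is 0.\<close>
fun succ_prob :: "(bool list \<Rightarrow> real) \<Rightarrow> nat \<Rightarrow> bool list \<Rightarrow> nat \<Rightarrow> real" where
  "succ_prob p 0 w j = (if j = 1 then 1 else 0)"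
| "succ_prob p (Suc r) w j =
     (\<Sum>e = 1..j. real (j choose e) * p w ^ e * (1 - p w) ^ (j - e)
                    * succ_prob p r (w @ [True]) e)
     + (1 - p w) ^ j * succ_prob p r (w @ [False]) j"

text \<open>Success probability rho of the protocol p with k rounds, when exactly n stations
  contend with probability q n.\<close>
definition rho :: "(nat \<Rightarrow> real) \<Rightarrow> nat \<Rightarrow> (bool list \<Rightarrow> real) \<Rightarrow> real" where
  "rho q k p = (\<Sum>n. q n * succ_prob p k [] n)"

definition genfun :: "(nat \<Rightarrow> real) \<Rightarrow> real \<Rightarrow> real" where
  "genfun q x = (\<Sum>n. q n * x ^ n)"

text \<open>The probability p_w expressed through z_0,...,z_m (m = 2^k).\<close>
definition p_of_z :: "nat \<Rightarrow> (nat \<Rightarrow> real) \<Rightarrow> bool list \<Rightarrow> real" where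
  "p_of_z k z w =
     (let a = bin_val w * 2 ^ (k - length w) in
      (z (a + 2 ^ (k - length w)) - z (a + 2 ^ (k - length w - 1)))
      / (z (a + 2 ^ (k - length w)) - z a))"

end

theory Submission
  imports Defs
begin

lemma deriv_genfun:
  fixes q :: "nat \<Rightarrow> real"
  assumes q_nonneg: "\<And>n. q n \<ge> 0" and q_sum: "q sums 1" and x: "0 \<le> x" "x < 1"
  shows "summable (\<lambda>n. q n * (real n * x^(n-1)))"
    and "deriv (genfun q) x = (\<Sum>n. q n * (real n * x^(n-1)))"
proof -
  have sq: "summable q" using q_sum sums_summable by blast
  have sm: "summable (\<lambda>n. q n * y^n)" if "norm y < 1" for y :: real
  proof (rule summable_comparison_test[OF _ sq])
    show "\<exists>N. \<forall>n\<ge>N. norm (q n * y ^ n) \<le> q n"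
    proof (intro exI allI impI)
      fix n :: nat
      have "\<bar>y\<bar>^n \<le> 1" using that by (simp add: power_le_one)
      then show "norm (q n * y ^ n) \<le> q n"
        using q_nonneg[of n] by (simp add: abs_mult power_abs mult_left_le)
    qed
  qed
  have sd: "summable (\<lambda>n. diffs q n * x^n)"
    by (rule termdiff_converges[where K=1]) (use x sm in auto)
  have D: "DERIV (\<lambda>x. \<Sum>n. q n * x^n) x :> (\<Sum>n. diffs q n * x^n)"
    by (rule termdiffs_strong[where K=1]) (use x sq in auto)
  have gf: "genfun q = (\<lambda>x. \<Sum>n. q n * x^n)" by (simp add: genfun_def fun_eq_iff)
  define g where "g n = q n * (real n * x^(n-1))" for n
  have gs: "(\<lambda>n. g (Suc n)) = (\<lambda>n. diffs q n * x^n)"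
    by (simp add: g_def diffs_def fun_eq_iff)
  have sg: "summable g" using sd gs summable_Suc_iff[of g] by simp
  then show s: "summable (\<lambda>n. q n * (real n * x^(n-1)))" unfolding g_def .
  have g0: "g 0 = 0" by (simp add: g_def)
  have "(\<Sum>n. g n) = (\<Sum>n. diffs q n * x^n)"
    using suminf_split_head[OF sg] gs g0 by simp
  then show "deriv (genfun q) x = (\<Sum>n. q n * (real n * x^(n-1)))"
    using DERIV_imp_deriv[OF D] gf unfolding g_def by simp
qed

lemma binom_deriv:
  fixes y L :: real
  shows "(\<Sum>e=1..j. real (j choose e) * (real e * y^(e-1)) * L^(j-e)) = real j * (y+L)^(j-1)"
proof (cases j)
  case 0 then show ?thesis by simp
next
  case (Suc n)
  have "(\<Sum>e=1..Suc n. real (Suc n choose e) * (real e * y^(e-1)) * L^(Suc n-e))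
      = (\<Sum>e=0..n. real (Suc n choose Suc e) * (real (Suc e) * y^e) * L^(n-e))"
    unfolding One_nat_def sum.shift_bounds_cl_Suc_ivl by simp
  also have "\<dots> = (\<Sum>e=0..n. real (Suc n) * (real (n choose e) * y^e * L^(n-e)))"
  proof (rule sum.cong[OF refl])
    fix e
    have "real (Suc n choose Suc e) * real (Suc e) = real (Suc n) * real (n choose e)"
      using Suc_times_binomial[of e n] by (metis of_nat_mult mult.commute)
    then show "real (Suc n choose Suc e) * (real (Suc e) * y^e) * L^(n-e)
       = real (Suc n) * (real (n choose e) * y^e * L^(n-e))"
      by (metis (no_types, lifting) mult.assoc mult.left_commute)
  qed
  also have "\<dots> = real (Suc n) * (y+L)^n"
    by (simp add: binomial_ring sum_distrib_left atLeast0AtMost)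
  finally show ?thesis using Suc by simp
qed

lemma bin_val_snoc: "bin_val (w @ [b]) = 2 * bin_val w + (if b then 1 else 0)"
  by (simp add: bin_val_def)

lemma bin_val_less: "bin_val w < 2 ^ length w"
  by (induction w rule: rev_induct) (auto simp: bin_val_snoc bin_val_def)

definition Tsum :: "(nat \<Rightarrow> real) \<Rightarrow> nat \<Rightarrow> nat \<Rightarrow> nat \<Rightarrow> real" where
  "Tsum z r a j = (\<Sum>i=1..2^r. (z (a+i) - z (a+i-1)) * (real j * (z (a+i-1) - z a)^(j-1)))"

lemma Tsum_split:
  "Tsum z (Suc r) a j = Tsum z r a j +
     (\<Sum>i=1..2^r. (z (a+2^r+i) - z (a+2^r+i-1)) * (real j * (z (a+2^r+i-1) - z a)^(j-1)))"
proof -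
  have "Tsum z (Suc r) a j = (\<Sum>i=1..2^r+2^r. (z (a+i) - z (a+i-1)) * (real j * (z (a+i-1) - z a)^(j-1)))"
    by (simp add: Tsum_def mult_2)
  also have "\<dots> = Tsum z r a j + (\<Sum>i=2^r+1..2^r+2^r. (z (a+i) - z (a+i-1)) * (real j * (z (a+i-1) - z a)^(j-1)))"
    unfolding Tsum_def by (rule sum.ub_add_nat) simp
  also have "(\<Sum>i=2^r+1..2^r+2^r. (z (a+i) - z (a+i-1)) * (real j * (z (a+i-1) - z a)^(j-1)))
     = (\<Sum>i=1..2^r. (z (a+2^r+i) - z (a+2^r+i-1)) * (real j * (z (a+2^r+i-1) - z a)^(j-1)))"
    using sum.shift_bounds_cl_nat_ivl[of "\<lambda>i. (z (a+i) - z (a+i-1)) * (real j * (z (a+i-1) - z a)^(j-1))" 1 "2^r" "2^r"]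
    by (simp add: add.commute add.left_commute)
  finally show ?thesis .
qed

lemma combine:
  "(\<Sum>e=1..j. real (j choose e) * Lo^(j-e) * Tsum z r M e)
   = (\<Sum>i=1..2^r. (z (M+i) - z (M+i-1)) * (real j * (z (M+i-1) - z M + Lo)^(j-1)))"
proof -
  have "(\<Sum>e=1..j. real (j choose e) * Lo^(j-e) * Tsum z r M e)
     = (\<Sum>e=1..j. \<Sum>i=1..2^r. real (j choose e) * Lo^(j-e) * ((z (M+i) - z (M+i-1)) * (real e * (z (M+i-1) - z M)^(e-1))))"
    by (simp add: Tsum_def sum_distrib_left)
  also have "\<dots> = (\<Sum>i=1..2^r. \<Sum>e=1..j. real (j choose e) * Lo^(j-e) * ((z (M+i) - z (M+i-1)) * (real e * (z (M+i-1) - z M)^(e-1))))"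
    by (rule sum.swap)
  also have "\<dots> = (\<Sum>i=1..2^r. (z (M+i) - z (M+i-1)) * (real j * (z (M+i-1) - z M + Lo)^(j-1)))"
  proof (rule sum.cong[OF refl])
    fix i
    have "(\<Sum>e=1..j. real (j choose e) * Lo^(j-e) * ((z (M+i) - z (M+i-1)) * (real e * (z (M+i-1) - z M)^(e-1))))
       = (z (M+i) - z (M+i-1)) * (\<Sum>e=1..j. real (j choose e) * (real e * (z (M+i-1) - z M)^(e-1)) * Lo^(j-e))"
      by (simp add: sum_distrib_left mult_ac)
    also have "\<dots> = (z (M+i) - z (M+i-1)) * (real j * (z (M+i-1) - z M + Lo)^(j-1))"
      by (simp only: binom_deriv)
    finally show "(\<Sum>e=1..j. real (j choose e) * Lo^(j-e) * ((z (M+i) - z (M+i-1)) * (real e * (z (M+i-1) - z M)^(e-1))))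
       = (z (M+i) - z (M+i-1)) * (real j * (z (M+i-1) - z M + Lo)^(j-1))" .
  qed
  finally show ?thesis .
qed

lemma idx_bound:
  assumes "length w + r = k"
  shows "bin_val w * 2^r + 2^r \<le> 2^k"
proof -
  have "bin_val w + 1 \<le> 2^length w" using bin_val_less[of w] by simp
  then have "(bin_val w + 1) * 2^r \<le> 2^length w * 2^r" by (rule mult_le_mono1)
  moreover have "bin_val w * 2^r + 2^r = (bin_val w + 1)*2^r" by simp
  moreover have "(2::nat)^k = 2^length w * 2^r" using assms by (simp add: power_add[symmetric])
  ultimately show ?thesis by simp
qed

lemma main:
  assumes mono: "strict_mono_on {0..2^k} z"
    and hp: "\<forall>v. length v < k \<longrightarrow> p v = p_of_z k z v"
  shows "length w + r = k \<Longrightarrow>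
    (z (bin_val w * 2^r + 2^r) - z (bin_val w * 2^r))^j * succ_prob p r w j = Tsum z r (bin_val w * 2^r) j"
proof (induction r arbitrary: w j)
  case 0
  show ?case
  proof (cases "j \<le> 1")
    case True
    then consider "j = 0" | "j = 1" by linarith
    then show ?thesis by cases (auto simp: Tsum_def)
  next
    case False
    then show ?thesis by (auto simp: Tsum_def)
  qed
next
  case (Suc r)
  define a where "a = bin_val w * 2^Suc r"
  define M where "M = a + 2^r"
  define R where "R = a + 2^Suc r"
  have bT: "bin_val (w @ [True]) * 2^r = M"
    by (simp add: M_def a_def bin_val_snoc algebra_simps)
  have bF: "bin_val (w @ [False]) * 2^r = a"
    by (simp add: a_def bin_val_snoc algebra_simps)
  have MR: "M + 2^r = R" by (simp add: M_def R_def)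
  have aM: "a + 2^r = M" by (simp add: M_def)
  have Rk: "R \<le> 2^k" using idx_bound[of w "Suc r" k] Suc.prems by (simp add: R_def a_def)
  have lt1: "z a < z M" using mono Rk
    by (intro strict_mono_onD[OF mono]) (auto simp: M_def R_def)
  have lt2: "z M < z R" using mono Rk
    by (intro strict_mono_onD[OF mono]) (auto simp: M_def R_def)
  define U where "U = z R - z M"
  define Lo where "Lo = z M - z a"
  define D where "D = z R - z a"
  have DUL: "D = U + Lo" by (simp add: D_def U_def Lo_def)
  have Dpos: "D > 0" using lt1 lt2 by (simp add: D_def)
  have lw: "length w < k" "k - length w = Suc r" "k - Suc (length w) = r" using Suc.prems by auto
  have pw: "p w = U / D"
    using hp lw by (simp add: p_of_z_def Let_def U_def D_def M_def R_def a_def)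
  have Dp: "D * p w = U" using pw Dpos by simp
  have Dq: "D * (1 - p w) = Lo" using pw Dpos DUL by (simp add: field_simps)
  have IHT: "U^e * succ_prob p r (w @ [True]) e = Tsum z r M e" for e
    using Suc.IH[of "w @ [True]" e] Suc.prems by (simp add: bT MR U_def)
  have IHF: "Lo^j * succ_prob p r (w @ [False]) j = Tsum z r a j"
    using Suc.IH[of "w @ [False]" j] Suc.prems by (simp add: bF aM Lo_def)
  have "D^j * succ_prob p (Suc r) w j
     = (\<Sum>e=1..j. real (j choose e) * Lo^(j-e) * (U^e * succ_prob p r (w @ [True]) e))
       + Lo^j * succ_prob p r (w @ [False]) j"
  proof -
    have "D^j * (\<Sum>e=1..j. real (j choose e) * p w ^ e * (1 - p w) ^ (j - e) * succ_prob p r (w @ [True]) e)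
       = (\<Sum>e=1..j. real (j choose e) * Lo^(j-e) * (U^e * succ_prob p r (w @ [True]) e))"
      unfolding sum_distrib_left
    proof (rule sum.cong[OF refl])
      fix e assume "e \<in> {1..j}"
      then have "D^j = D^e * D^(j-e)" by (simp add: power_add[symmetric])
      then have "D^j * (real (j choose e) * p w ^ e * (1 - p w) ^ (j - e) * succ_prob p r (w @ [True]) e)
          = real (j choose e) * (D * (1 - p w))^(j-e) * ((D * p w)^e * succ_prob p r (w @ [True]) e)"
        by (simp add: power_mult_distrib mult_ac)
      then show "D^j * (real (j choose e) * p w ^ e * (1 - p w) ^ (j - e) * succ_prob p r (w @ [True]) e)
          = real (j choose e) * Lo^(j-e) * (U^e * succ_prob p r (w @ [True]) e)"
        by (simp add: Dp Dq)
    qed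
    moreover have "D^j * ((1 - p w) ^ j * succ_prob p r (w @ [False]) j) = Lo^j * succ_prob p r (w @ [False]) j"
      using Dq by (metis mult.assoc power_mult_distrib)
    ultimately show ?thesis by (simp add: distrib_left)
  qed
  also have "\<dots> = (\<Sum>e=1..j. real (j choose e) * Lo^(j-e) * Tsum z r M e) + Tsum z r a j"
    by (simp add: IHT IHF)
  also have "\<dots> = Tsum z (Suc r) a j"
    unfolding combine Tsum_split
    by (simp add: Lo_def aM)
  finally show ?case unfolding D_def R_def a_def .
qed

lemma rho_formula:
  fixes q :: "nat \<Rightarrow> real"
  assumes q_nonneg: "\<And>n. q n \<ge> 0" and q_sum: "q sums 1"
    and z0: "z 0 = 0" and z1: "z (2^k) = 1" and mono: "strict_mono_on {0..2^k} z"
    and hp: "\<forall>v. length v < k \<longrightarrow> p v = p_of_z k z v"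
  shows "rho q k p = (\<Sum>i = 1..2 ^ k. (z i - z (i - 1)) * deriv (genfun q) (z (i - 1)))"
proof -
  have sp: "succ_prob p k [] n = (\<Sum>i=1..2^k. (z i - z (i-1)) * (real n * z (i-1) ^ (n-1)))" for n
    using main[OF mono hp, of "[]" k n] by (simp add: bin_val_def Tsum_def z0 z1)
  have xr: "0 \<le> z (i-1) \<and> z (i-1) < 1" if "i \<in> {1..2^k}" for i
  proof
    show "0 \<le> z (i-1)"
    proof (cases "i - 1 = 0")
      case True then show ?thesis using z0 by simp
    next
      case False
      have "0 < z (i-1)" using z0 strict_mono_onD[OF mono, of 0 "i-1"] that False by auto
      then show ?thesis by simp
    qed
    show "z (i-1) < 1" using z1 strict_mono_onD[OF mono, of "i-1" "2^k"] that by auto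
  qed
  have "rho q k p = (\<Sum>n. \<Sum>i=1..2^k. (z i - z (i-1)) * (q n * (real n * z (i-1) ^ (n-1))))"
    unfolding rho_def sp by (simp add: sum_distrib_left mult_ac)
  also have "\<dots> = (\<Sum>i=1..2^k. \<Sum>n. (z i - z (i-1)) * (q n * (real n * z (i-1) ^ (n-1))))"
    by (rule suminf_sum) (use deriv_genfun(1)[OF q_nonneg q_sum] xr summable_mult in blast)
  also have "\<dots> = (\<Sum>i = 1..2 ^ k. (z i - z (i - 1)) * deriv (genfun q) (z (i - 1)))"
  proof (rule sum.cong[OF refl])
    fix i :: nat assume i: "i \<in> {1..2^k}"
    show "(\<Sum>n. (z i - z (i-1)) * (q n * (real n * z (i-1) ^ (n-1)))) = (z i - z (i - 1)) * deriv (genfun q) (z (i - 1))"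
      using suminf_mult[OF deriv_genfun(1)[OF q_nonneg q_sum, of "z (i-1)"], of "z i - z (i-1)"]
        deriv_genfun(2)[OF q_nonneg q_sum, of "z (i-1)"] xr[OF i] by simp
  qed
  finally show ?thesis .
qed

fun zf :: "(bool list \<Rightarrow> real) \<Rightarrow> nat \<Rightarrow> bool list \<Rightarrow> nat \<Rightarrow> real" where
  "zf p 0 w i = (if i = 0 then 0 else 1)"
| "zf p (Suc r) w i = (if i \<le> 2^r then (1 - p w) * zf p r (w @ [False]) i
                      else (1 - p w) + p w * zf p r (w @ [True]) (i - 2^r))"

lemma zf0: "zf p r w 0 = 0"
  by (induction r arbitrary: w) auto

lemma zf1: "zf p r w (2^r) = 1"
  by (induction r arbitrary: w) auto

lemma zf_alt: "2^r \<le> i \<Longrightarrow> zf p (Suc r) w i = (1 - p w) + p w * zf p r (w @ [True]) (i - 2^r)"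
  by (cases "i = 2^r") (auto simp: zf0 zf1)

lemma zf_mono:
  "(\<forall>v. length v < length w + r \<longrightarrow> 0 < p v \<and> p v < 1) \<Longrightarrow> strict_mono_on {0..2^r} (zf p r w)"
proof (induction r arbitrary: w)
  case 0
  show ?case by (rule strict_mono_onI) auto
next
  case (Suc r)
  have pw: "0 < p w" "p w < 1" using Suc.prems by auto
  have mF: "strict_mono_on {0..2^r} (zf p r (w @ [False]))"
    using Suc.IH[of "w @ [False]"] Suc.prems by auto
  have mT: "strict_mono_on {0..2^r} (zf p r (w @ [True]))"
    using Suc.IH[of "w @ [True]"] Suc.prems by auto
  show ?case
  proof (rule strict_mono_onI)
    fix i j :: nat assume i: "i \<in> {0..2^Suc r}" and j: "j \<in> {0..2^Suc r}" and ij: "i < j"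
    show "zf p (Suc r) w i < zf p (Suc r) w j"
    proof (cases "j \<le> 2^r")
      case True
      then have "zf p r (w @ [False]) i < zf p r (w @ [False]) j"
        using strict_mono_onD[OF mF, of i j] ij by auto
      then show ?thesis using True ij pw by simp
    next
      case jF: False
      show ?thesis
      proof (cases "2^r \<le> i")
        case True
        then have "zf p r (w @ [True]) (i - 2^r) < zf p r (w @ [True]) (j - 2^r)"
          using strict_mono_onD[OF mT, of "i - 2^r" "j - 2^r"] ij i j by auto
        then show ?thesis using zf_alt[OF True, of p w] zf_alt[of r j p w] True ij pw by auto
      next
        case False
        have a: "zf p r (w @ [False]) i \<le> 1"
          using strict_mono_onD[OF mF, of i "2^r"] False zf1[of p r "w @ [False]"] by auto
        have b: "0 < zf p r (w @ [True]) (j - 2^r)"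
          using strict_mono_onD[OF mT, of 0 "j - 2^r"] jF j zf0[of p r "w @ [True]"] by auto
        have "zf p (Suc r) w i \<le> 1 - p w" using False a pw by (simp add: mult_left_le)
        also have "\<dots> < zf p (Suc r) w j" using jF b pw by simp
        finally show ?thesis .
      qed
    qed
  qed
qed

lemma zf_pos:
  assumes pp: "\<forall>v. length v < k \<longrightarrow> 0 < p v \<and> p v < 1"
  shows "length w + r = k \<Longrightarrow> \<exists>L D. D > 0 \<and> (\<forall>i::nat \<le> 2^r. zf p k [] (bin_val w * 2^r + i) = L + D * zf p r w i)"
proof (induction w arbitrary: r rule: rev_induct)
  case Nil
  then show ?case by (intro exI[of _ 0] exI[of _ 1]) (auto simp: bin_val_def)
next
  case (snoc b w)
  obtain L D where D: "D > 0" and LD: "\<forall>i::nat \<le> 2^Suc r. zf p k [] (bin_val w * 2^Suc r + i) = L + D * zf p (Suc r) w i"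
    using snoc.IH[of "Suc r"] snoc.prems by auto
  have pw: "0 < p w" "p w < 1" using pp snoc.prems by auto
  show ?case
  proof (cases b)
    case False
    have "D * (1 - p w) > 0" using D pw by simp
    moreover have "\<forall>i::nat \<le> 2^r. zf p k [] (bin_val (w @ [b]) * 2 ^ r + i) = L + (D * (1 - p w)) * zf p r (w @ [b]) i"
    proof (intro allI impI)
      fix i :: nat assume i: "i \<le> 2^r"
      have "bin_val (w @ [b]) * 2^r + i = bin_val w * 2^Suc r + i" using False by (simp add: bin_val_snoc)
      then show "zf p k [] (bin_val (w @ [b]) * 2 ^ r + i) = L + D * (1 - p w) * zf p r (w @ [b]) i"
        using LD[rule_format, of i] i False by (simp add: mult.assoc)
    qed
    ultimately show ?thesis by blast
  next
    case True
    have "D * p w > 0" using D pw by simp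
    moreover have "\<forall>i::nat \<le> 2^r. zf p k [] (bin_val (w @ [b]) * 2 ^ r + i) = (L + D * (1 - p w)) + (D * p w) * zf p r (w @ [b]) i"
    proof (intro allI impI)
      fix i :: nat assume i: "i \<le> 2^r"
      have ix: "bin_val (w @ [b]) * 2^r + i = bin_val w * 2^Suc r + (2^r + i)" using True by (simp add: bin_val_snoc algebra_simps)
      have za: "zf p (Suc r) w (2^r + i) = (1 - p w) + p w * zf p r (w @ [True]) i"
        using zf_alt[of r "2^r + i" p w] by simp
      have "zf p k [] (bin_val (w @ [b]) * 2 ^ r + i) = L + D * zf p (Suc r) w (2^r + i)"
        unfolding ix using LD i by simp
      also have "\<dots> = L + D * ((1 - p w) + p w * zf p r (w @ [True]) i)" by (simp only: za)
      also have "\<dots> = (L + D * (1 - p w)) + (D * p w) * zf p r (w @ [b]) i" using True by (simp add: algebra_simps)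
      finally show "zf p k [] (bin_val (w @ [b]) * 2 ^ r + i) = (L + D * (1 - p w)) + (D * p w) * zf p r (w @ [b]) i" .
    qed
    ultimately show ?thesis by blast
  qed
qed

lemma zf_p:
  assumes pp: "\<forall>v. length v < k \<longrightarrow> 0 < p v \<and> p v < 1" and lw: "length w < k"
  shows "p_of_z k (zf p k []) w = p w"
proof -
  obtain r where r: "k - length w = Suc r" using lw by (metis Suc_diff_Suc)
  have r2: "k - length w - 1 = r" using r by simp
  obtain L D where D: "D > 0" and LD: "\<forall>i::nat \<le> 2^Suc r. zf p k [] (bin_val w * 2^Suc r + i) = L + D * zf p (Suc r) w i"
    using zf_pos[OF pp, of w "Suc r"] r lw by (metis Nat.add_diff_assoc2 add_diff_cancel_left' le_add_diff_inverse less_imp_le_nat)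
  define a where "a = bin_val w * 2^Suc r"
  have e0: "zf p k [] a = L" using LD[rule_format, of 0] by (simp add: zf0 a_def)
  have e1: "zf p k [] (a + 2^Suc r) = L + D" using LD[rule_format, of "2^Suc r"] zf1[of p "Suc r" w] by (simp add: a_def)
  have e2: "zf p k [] (a + 2^r) = L + D * (1 - p w)"
    using LD[rule_format, of "2^r"] zf1[of p r "w @ [False]"] by (simp add: a_def)
  have "p_of_z k (zf p k []) w = (zf p k [] (a + 2^Suc r) - zf p k [] (a + 2^r)) / (zf p k [] (a + 2^Suc r) - zf p k [] a)"
    unfolding p_of_z_def Let_def r r2 a_def by simp
  also have "\<dots> = ((L + D) - (L + D * (1 - p w))) / ((L + D) - L)" by (simp only: e0 e1 e2)
  also have "\<dots> = p w" using D by (simp add: field_simps)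
  finally show ?thesis .
qed

lemma pz_range:
  assumes z0: "z 0 = 0" and mono: "strict_mono_on {0..2^k} z" and lw: "length w < k"
  shows "0 < p_of_z k z w \<and> p_of_z k z w < 1"
proof -
  obtain r where r: "k - length w = Suc r" using lw by (metis Suc_diff_Suc)
  have r2: "k - length w - 1 = r" using r by simp
  define a where "a = bin_val w * 2^Suc r"
  have Rk: "a + 2^Suc r \<le> 2^k" using idx_bound[of w "Suc r" k] r lw by (simp add: a_def)
  have lt1: "z a < z (a + 2^r)"
    by (intro strict_mono_onD[OF mono]) (use Rk in auto)
  have lt2: "z (a + 2^r) < z (a + 2^Suc r)"
    by (intro strict_mono_onD[OF mono]) (use Rk in auto)
  show ?thesis unfolding p_of_z_def Let_def r r2 a_def[symmetric]
    using lt1 lt2 by (simp add: divide_less_eq)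
qed

theorem proposition1:
  fixes k :: nat and q :: "nat \<Rightarrow> real"
  assumes q_nonneg: "\<And>n. q n \<ge> 0"
    and q0: "q 0 = 0"
    and q_sum: "q sums 1"
  shows
    "(\<forall>p :: bool list \<Rightarrow> real.
        (\<forall>w. length w < k \<longrightarrow> 0 < p w \<and> p w < 1) \<longrightarrow>
        (\<exists>z :: nat \<Rightarrow> real.
            z 0 = 0 \<and> z (2 ^ k) = 1 \<and> strict_mono_on {0..2 ^ k} z \<and>
            rho q k p = (\<Sum>i = 1..2 ^ k. (z i - z (i - 1)) * deriv (genfun q) (z (i - 1))) \<and>
            (\<forall>w. length w < k \<longrightarrow> p w = p_of_z k z w)))
     \<and>
     (\<forall>z :: nat \<Rightarrow> real.
        z 0 = 0 \<and> z (2 ^ k) = 1 \<and> strict_mono_on {0..2 ^ k} z \<longrightarrow>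
        (\<forall>w. length w < k \<longrightarrow> 0 < p_of_z k z w \<and> p_of_z k z w < 1) \<and>
        rho q k (p_of_z k z) = (\<Sum>i = 1..2 ^ k. (z i - z (i - 1)) * deriv (genfun q) (z (i - 1))))"
proof (rule conjI)
  show "\<forall>p :: bool list \<Rightarrow> real.
        (\<forall>w. length w < k \<longrightarrow> 0 < p w \<and> p w < 1) \<longrightarrow>
        (\<exists>z :: nat \<Rightarrow> real.
            z 0 = 0 \<and> z (2 ^ k) = 1 \<and> strict_mono_on {0..2 ^ k} z \<and>
            rho q k p = (\<Sum>i = 1..2 ^ k. (z i - z (i - 1)) * deriv (genfun q) (z (i - 1))) \<and>
            (\<forall>w. length w < k \<longrightarrow> p w = p_of_z k z w))"
  proof (intro allI impI)
    fix p :: "bool list \<Rightarrow> real"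
    assume pp: "\<forall>w. length w < k \<longrightarrow> 0 < p w \<and> p w < 1"
    define z where "z = zf p k []"
    have z0: "z 0 = 0" by (simp add: z_def zf0)
    have z1: "z (2^k) = 1" by (simp add: z_def zf1)
    have mono: "strict_mono_on {0..2^k} z" unfolding z_def by (rule zf_mono) (use pp in simp)
    have hp: "\<forall>w. length w < k \<longrightarrow> p w = p_of_z k z w" using zf_p[OF pp] by (simp add: z_def)
    show "\<exists>z :: nat \<Rightarrow> real.
            z 0 = 0 \<and> z (2 ^ k) = 1 \<and> strict_mono_on {0..2 ^ k} z \<and>
            rho q k p = (\<Sum>i = 1..2 ^ k. (z i - z (i - 1)) * deriv (genfun q) (z (i - 1))) \<and>
            (\<forall>w. length w < k \<longrightarrow> p w = p_of_z k z w)"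
      using z0 z1 mono hp rho_formula[OF q_nonneg q_sum z0 z1 mono hp] by blast
  qed
next
  show "\<forall>z :: nat \<Rightarrow> real.
        z 0 = 0 \<and> z (2 ^ k) = 1 \<and> strict_mono_on {0..2 ^ k} z \<longrightarrow>
        (\<forall>w. length w < k \<longrightarrow> 0 < p_of_z k z w \<and> p_of_z k z w < 1) \<and>
        rho q k (p_of_z k z) = (\<Sum>i = 1..2 ^ k. (z i - z (i - 1)) * deriv (genfun q) (z (i - 1)))"
  proof (intro allI impI)
    fix z :: "nat \<Rightarrow> real"
    assume H: "z 0 = 0 \<and> z (2 ^ k) = 1 \<and> strict_mono_on {0..2 ^ k} z"
    have "\<forall>w. length w < k \<longrightarrow> 0 < p_of_z k z w \<and> p_of_z k z w < 1"
      using H pz_range by blast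
    moreover have "rho q k (p_of_z k z) = (\<Sum>i = 1..2 ^ k. (z i - z (i - 1)) * deriv (genfun q) (z (i - 1)))"
      using H rho_formula[OF q_nonneg q_sum, of z k "p_of_z k z"] by blast
    ultimately show "(\<forall>w. length w < k \<longrightarrow> 0 < p_of_z k z w \<and> p_of_z k z w < 1) \<and>
        rho q k (p_of_z k z) = (\<Sum>i = 1..2 ^ k. (z i - z (i - 1)) * deriv (genfun q) (z (i - 1)))" ..
  qed
qed

end
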